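(* Consider a non-periodic $F$-orbit containing $(0,-1)$ and $(0,1)$, with $(0,1)=F^n(0,-1)$. Let $w=w_0\cdots w_{n-1}$ be the associated positive boundary word encoding the itinerary from $(0,-1)$ to $(0,1)$, and let its rank be $2m-1$. Then: <ol> <li>The reduced word $\underline w=w_1\cdots w_{n-1}$ is a palindrome consisting of $2m-1$ blocks: $$\underline w=a^{i_1}b^{i_2}a^{i_3}\cdots a^{i_m}\cdots a^{i_3}b^{i_2}a^{i_1}$$ (letters alternating, with $i_k\ge1$). Here the middle block is a power of $a$ if $m$ is odd and a power of $b$ if $m$ is even, and $i_m+2\sum_{k=1}^{m-1}i_k=n-1$.</li> <li>$n$ is odd and $i_m$ is even if and only if the boundary segment $(0,-1),F(0,-1),\dots,F^n(0,-1)$ meets $\mathrm{Fix}(R)$ exactly once. The intersection lies in $\mathrm{dom}(\mathrm M_a)$ (resp. $\mathrm{dom}(\mathrm M_b)$), in which case $m$ is odd (resp. even).</li> <li>$n$ is even and $i_m$ is odd if and only if the boundary segment meets $\mathrm{Fix}(F\circ R)$ exactly once. The intersection lies in $\mathrm{dom}(\mathrm M_a)$ if either $i_m=1$ and $m$ is even, or $i_m>1$ and $m$ is odd; it lies in $\mathrm{dom}(\mathrm M_b)$ if either $i_m=1$ and $m$ is odd, or $i_m>1$ and $m$ is even.</li> </ol>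
   Context: For real parameters $\mathrm a,\mathrm b$, the map $F:\mathbb R^2\to\mathbb R^2$ is $F(x,y)=(\mathrm a x-y,x)$ if $x>0$ or ($x=0$ and $y\le0$), and $F(x,y)=(\mathrm b x-y,x)$ otherwise. $\mathrm{dom}(\mathrm M_a)$ is the open right half-plane together with the negative $y$-axis, and $\mathrm{dom}(\mathrm M_b)$ is its complement. $R(x,y)=(y,x)$, so $F^{-1}=RFR$. $\mathrm{Fix}(R)=\{(x,x):x\in\mathbb R\}$ and $\mathrm{Fix}(F\circ R)=\{(\tfrac{\mathrm a}{2}y,y):y>0\}\cup\{(\tfrac{\mathrm b}2y,y):y\le0\}$. Boundary segment and word: for an orbit segment $z_0=(0,-1),z_1,\dots,z_n$ of $F$ with $z_n=(0,1)$, the word is $w=w_0\cdots w_{n-1}$ with $w_t=a$ if $z_t\in\mathrm{dom}(\mathrm M_a)$ and $b$ otherwise; it is positive because $w_0=a$. The rank of $w$ is $1+|w|_{ab}+|w|_{ba}$, where $|w|_u$ counts occurrences of the factor $u$; it equals the number of half-turns around the origin. *)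

theory Defs
  imports Complex_Main
begin

datatype letter = La | Lb

definition domMa :: "(real \<times> real) set" where
  "domMa = {(x, y). x > 0 \<or> (x = 0 \<and> y \<le> 0)}"

definition domMb :: "(real \<times> real) set" where
  "domMb = - domMa"

definition F :: "real \<Rightarrow> real \<Rightarrow> real \<times> real \<Rightarrow> real \<times> real" where
  "F a b p = (case p of (x, y) \<Rightarrow>
      if (x, y) \<in> domMa then (a * x - y, x) else (b * x - y, x))"

definition Rf :: "real \<times> real \<Rightarrow> real \<times> real" where
  "Rf p = (snd p, fst p)"

definition FixR :: "(real \<times> real) set" where
  "FixR = {p. Rf p = p}"

definition FixFR :: "real \<Rightarrow> real \<Rightarrow> (real \<times> real) set" where
  "FixFR a b = {p. F a b (Rf p) = p}"

definition zpt :: "real \<Rightarrow> real \<Rightarrow> nat \<Rightarrow> real \<times> real" where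
  "zpt a b t = (F a b ^^ t) (0, -1)"

definition bword :: "real \<Rightarrow> real \<Rightarrow> nat \<Rightarrow> letter list" where
  "bword a b n = map (\<lambda>t. if zpt a b t \<in> domMa then La else Lb) [0..<n]"

definition occ :: "letter list \<Rightarrow> letter list \<Rightarrow> nat" where
  "occ u w = card {t. t + length u \<le> length w \<and> take (length u) (drop t w) = u}"

definition rank :: "letter list \<Rightarrow> nat" where
  "rank w = 1 + occ [La, Lb] w + occ [Lb, La] w"

text \<open>Index of the exponent used in block j (1 \<le> j \<le> 2m-1): i_1,...,i_m,...,i_1.\<close>
definition blkidx :: "nat \<Rightarrow> nat \<Rightarrow> nat" where
  "blkidx m j = (if j \<le> m then j else 2 * m - j)"

text \<open>a^(i_1) b^(i_2) a^(i_3) ... (middle i_m) ... b^(i_2) a^(i_1): 2m-1 alternating blocks.\<close>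
definition blocks :: "(nat \<Rightarrow> nat) \<Rightarrow> nat \<Rightarrow> letter list" where
  "blocks i m = concat (map (\<lambda>j. replicate (i (blkidx m j)) (if odd j then La else Lb)) [1..<2 * m])"

end

theory Submission
  imports Defs
begin


fun runs :: "letter list \<Rightarrow> (letter \<times> nat) list" where
  "runs [] = []"
| "runs (x # xs) = (case runs xs of [] \<Rightarrow> [(x, 1)]
     | (y, k) # r \<Rightarrow> if x = y then (y, Suc k) # r else (x, 1) # (y, k) # r)"

definition expand :: "(letter \<times> nat) list \<Rightarrow> letter list" where
  "expand R = concat (map (\<lambda>(x, k). replicate k x) R)"

fun alt :: "(letter \<times> nat) list \<Rightarrow> bool" where
  "alt (p # q # r) = (fst p \<noteq> fst q \<and> alt (q # r))"
| "alt _ = True"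

definition pos :: "(letter \<times> nat) list \<Rightarrow> bool" where
  "pos R = (\<forall>p\<in>set R. 1 \<le> snd p)"

definition ch :: "letter list \<Rightarrow> nat" where
  "ch w = card {t. Suc t < length w \<and> w ! t \<noteq> w ! Suc t}"

lemma expand_simps[simp]: "expand [] = []" "expand ((x,k) # R) = replicate k x @ expand R"
  by (simp_all add: expand_def)

lemma runs_expand: "expand (runs u) = u"
  by (induction u) (auto split: list.split prod.split)

lemma runs_ne: "xs \<noteq> [] \<Longrightarrow> runs xs \<noteq> [] \<and> fst (hd (runs xs)) = hd xs"
  by (induction xs) (auto split: list.split prod.split)

lemma runs_pos: "pos (runs u)"
  by (induction u) (fastforce simp: pos_def split: list.split prod.split)+

lemma runs_alt: "alt (runs u)"
proof (induction u)
  case Nil then show ?case by simp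
next
  case (Cons x xs)
  show ?case
  proof (cases "runs xs")
    case Nil then show ?thesis by simp
  next
    case (Cons p r)
    obtain y k where p: "p = (y, k)" by (cases p)
    show ?thesis
    proof (cases r)
      case Nil then show ?thesis using Cons p by auto
    next
      case (Cons q r')
      then show ?thesis using Cons.IH \<open>runs xs = p # r\<close> p by auto
    qed
  qed
qed

lemma alt_tl: "alt (p # R) \<Longrightarrow> alt R"
  by (cases R) auto

lemma alt_iff: "alt R \<longleftrightarrow> (\<forall>j. Suc j < length R \<longrightarrow> fst (R ! j) \<noteq> fst (R ! Suc j))"
proof (induction R rule: alt.induct)
  case (1 p q r)
  show ?case
  proof
    assume "alt (p # q # r)"
    then show "\<forall>j. Suc j < length (p # q # r) \<longrightarrow> fst ((p # q # r) ! j) \<noteq> fst ((p # q # r) ! Suc j)"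
      using 1 by (auto simp: nth_Cons split: nat.split)
  next
    assume h: "\<forall>j. Suc j < length (p # q # r) \<longrightarrow> fst ((p # q # r) ! j) \<noteq> fst ((p # q # r) ! Suc j)"
    have "fst p \<noteq> fst q" using h[rule_format, of 0] by simp
    moreover have "alt (q # r)" unfolding 1
    proof (intro allI impI)
      fix j assume "Suc j < length (q # r)"
      then show "fst ((q # r) ! j) \<noteq> fst ((q # r) ! Suc j)" using h[rule_format, of "Suc j"] by simp
    qed
    ultimately show "alt (p # q # r)" by simp
  qed
qed auto

lemma alt_rev: "alt R \<Longrightarrow> alt (rev R)"
  unfolding alt_iff
proof (intro allI impI)
  fix j assume h: "\<forall>j. Suc j < length R \<longrightarrow> fst (R ! j) \<noteq> fst (R ! Suc j)"
    and j: "Suc j < length (rev R)"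
  define i where "i = length R - Suc (Suc j)"
  have "Suc i < length R" "Suc i = length R - Suc j" using j by (auto simp: i_def)
  then show "fst (rev R ! j) \<noteq> fst (rev R ! Suc j)"
    using h[rule_format, of i] j by (auto simp: rev_nth i_def)
qed

lemma runs_rep: "1 \<le> k \<Longrightarrow> (v = [] \<or> hd v \<noteq> x) \<Longrightarrow> runs (replicate k x @ v) = (x, k) # runs v"
proof (induction k)
  case 0 then show ?case by simp
next
  case (Suc k)
  show ?case
  proof (cases "k = 0")
    case True
    show ?thesis
    proof (cases v)
      case Nil then show ?thesis using True by simp
    next
      case (Cons y r)
      then obtain k' rr where "runs v = (y, k') # rr"
        using runs_ne[of v] by (cases "runs v") auto
      then show ?thesis using True Suc.prems Cons by simp
    qed
  next
    case False
    then show ?thesis using Suc by simp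
  qed
qed

lemma runs_unique: "alt R \<Longrightarrow> pos R \<Longrightarrow> runs (expand R) = R"
proof (induction R)
  case Nil then show ?case by simp
next
  case (Cons p R)
  obtain x k where p: "p = (x, k)" by (cases p)
  have IH: "runs (expand R) = R" using Cons alt_tl[of p R] by (auto simp: pos_def)
  have k: "1 \<le> k" using Cons.prems p by (auto simp: pos_def)
  have hd: "expand R = [] \<or> hd (expand R) \<noteq> x"
  proof (cases R)
    case Nil then show ?thesis by simp
  next
    case (Cons q R')
    obtain y k' where q: "q = (y, k')" by (cases q)
    have "1 \<le> k'" using \<open>pos (p # R)\<close> Cons q by (auto simp: pos_def)
    moreover have "x \<noteq> y" using \<open>alt (p # R)\<close> Cons p q by simp
    ultimately show ?thesis using Cons q by (cases k') auto
  qed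
  show ?case using runs_rep[OF k hd] IH p by simp
qed

lemma expand_rev: "expand (rev R) = rev (expand R)"
  by (induction R) (auto simp: expand_def)

lemma runs_pal: "rev u = u \<Longrightarrow> runs u = rev (runs u)"
proof -
  assume pal: "rev u = u"
  have "runs u = runs (rev (expand (runs u)))" using pal by (simp add: runs_expand)
  also have "\<dots> = runs (expand (rev (runs u)))" by (simp add: expand_rev)
  also have "\<dots> = rev (runs u)"
    using runs_unique[OF alt_rev[OF runs_alt]] runs_pos by (simp add: pos_def)
  finally show ?thesis .
qed

lemma ch_Nil[simp]: "ch [] = 0" and ch_single[simp]: "ch [x] = 0"
  by (simp_all add: ch_def)

lemma ch_Cons2: "ch (x # y # r) = ch (y # r) + (if x \<noteq> y then 1 else 0)"
proof -
  define A where "A = {t. Suc t < length (y # r) \<and> (y # r) ! t \<noteq> (y # r) ! Suc t}"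
  have eq: "{t. Suc t < length (x # y # r) \<and> (x # y # r) ! t \<noteq> (x # y # r) ! Suc t}
      = (if x \<noteq> y then {0} else {}) \<union> Suc ` A"
  proof (rule set_eqI)
    fix t show "t \<in> {t. Suc t < length (x # y # r) \<and> (x # y # r) ! t \<noteq> (x # y # r) ! Suc t}
      \<longleftrightarrow> t \<in> (if x \<noteq> y then {0} else {}) \<union> Suc ` A"
      by (cases t) (auto simp: A_def)
  qed
  have fin: "finite A" unfolding A_def by (rule finite_subset[of _ "{..<length (y#r)}"]) auto
  have "card ((if x \<noteq> y then {0} else {}) \<union> Suc ` A) = card A + (if x \<noteq> y then 1 else 0)"
    using fin by (auto simp: card_image)
  then show ?thesis unfolding ch_def eq A_def[symmetric] by simp
qed

lemma runs_len: "xs \<noteq> [] \<Longrightarrow> length (runs xs) = Suc (ch xs)"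
proof (induction xs)
  case Nil then show ?case by simp
next
  case (Cons x xs)
  show ?case
  proof (cases xs)
    case Nil then show ?thesis by simp
  next
    case (Cons y r)
    then obtain k rr where R: "runs xs = (y, k) # rr"
      using runs_ne[of xs] by (cases "runs xs") auto
    have "length (runs xs) = Suc (ch xs)" using Cons.IH Cons by simp
    then show ?thesis using R Cons by (simp add: ch_Cons2)
  qed
qed

lemma take2: "Suc t < length w \<Longrightarrow> take (Suc (Suc 0)) (drop t w) = [w ! t, w ! Suc t]"
proof -
  assume h: "Suc t < length w"
  have "drop t w = w ! t # w ! Suc t # drop (Suc (Suc t)) w"
    using h by (simp add: Cons_nth_drop_Suc)
  then show ?thesis by simp
qed

lemma occ_ch: "occ [La, Lb] w + occ [Lb, La] w = ch w"
proof -
  define A1 where "A1 = {t. t + length [La, Lb] \<le> length w \<and> take (length [La, Lb]) (drop t w) = [La, Lb]}"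
  define A2 where "A2 = {t. t + length [Lb, La] \<le> length w \<and> take (length [Lb, La]) (drop t w) = [Lb, La]}"
  define C where "C = {t. Suc t < length w \<and> w ! t \<noteq> w ! Suc t}"
  have A1: "A1 = {t. Suc t < length w \<and> w ! t = La \<and> w ! Suc t = Lb}"
    unfolding A1_def by (auto simp: take2 Suc_le_eq)
  have A2: "A2 = {t. Suc t < length w \<and> w ! t = Lb \<and> w ! Suc t = La}"
    unfolding A2_def by (auto simp: take2 Suc_le_eq)
  have CU: "C = A1 \<union> A2" unfolding A1 A2 C_def
  proof (rule set_eqI)
    fix t show "t \<in> {t. Suc t < length w \<and> w ! t \<noteq> w ! Suc t} \<longleftrightarrow>
     t \<in> {t. Suc t < length w \<and> w ! t = La \<and> w ! Suc t = Lb} \<union> {t. Suc t < length w \<and> w ! t = Lb \<and> w ! Suc t = La}"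
      by (cases "w ! t"; cases "w ! Suc t") auto
  qed
  have f1: "finite A1" unfolding A1 by (rule finite_subset[of _ "{..<length w}"]) auto
  have f2: "finite A2" unfolding A2 by (rule finite_subset[of _ "{..<length w}"]) auto
  have d: "A1 \<inter> A2 = {}" unfolding A1 A2 by auto
  have "card C = card A1 + card A2" unfolding CU using card_Un_disjoint[OF f1 f2 d] .
  then show ?thesis by (simp add: occ_def ch_def A1_def A2_def C_def)
qed

lemma alt_letters:
  assumes "alt R" "R \<noteq> []" "fst (R ! 0) = La" "j < length R"
  shows "fst (R ! j) = (if even j then La else Lb)"
  using assms(4)
proof (induction j)
  case 0 then show ?case using assms by simp
next
  case (Suc j)
  have "fst (R ! j) \<noteq> fst (R ! Suc j)" using assms(1) Suc.prems by (simp add: alt_iff)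
  then show ?case using Suc by (cases "fst (R ! Suc j)") (auto split: if_splits)
qed

lemma comb:
  assumes ne: "u \<noteq> []" and hd: "hd u = La" and pal: "rev u = u"
    and len: "Suc (ch u) = 2 * m - 1"
  shows "\<exists>i. (\<forall>k\<in>{1..m}. 1 \<le> i k) \<and> u = blocks i m"
proof -
  define R where "R = runs u"
  have lR: "length R = 2 * m - 1" using runs_len[OF ne] len by (simp add: R_def)
  have m1: "1 \<le> m" using lR len by simp
  have RR: "R = rev R" using runs_pal[OF pal] by (simp add: R_def)
  have Rne: "R \<noteq> []" and R0: "fst (R ! 0) = La"
    using runs_ne[OF ne] hd by (auto simp: R_def hd_conv_nth)
  have let_: "fst (R ! j) = (if even j then La else Lb)" if "j < length R" for j
    using alt_letters[OF runs_alt[of u, folded R_def] Rne R0 that] .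
  have posR: "\<forall>p\<in>set R. 1 \<le> snd p" using runs_pos[of u] by (simp add: pos_def R_def)
  define i where "i k = snd (R ! (k - 1))" for k
  have ipos: "\<forall>k\<in>{1..m}. 1 \<le> i k"
    using posR lR m1 by (auto simp: i_def)
  define g where "g = (\<lambda>(x::letter, k::nat). replicate k x)"
  have u: "u = concat (map g R)" using runs_expand[of u] by (simp add: expand_def g_def R_def)
  have m_eq: "map g R = map (\<lambda>j. g (R ! (j - 1))) [1..<2 * m]"
    by (rule nth_equalityI) (auto simp: lR)
  have bl: "map (\<lambda>j. replicate (i (blkidx m j)) (if odd j then La else Lb)) [1..<2 * m]
      = map (\<lambda>j. g (R ! (j - 1))) [1..<2 * m]"
  proof (rule map_cong[OF refl])
    fix j assume "j \<in> set [1..<2 * m]"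
    then have j: "1 \<le> j" "j < 2 * m" by auto
    have f: "fst (R ! (j - 1)) = (if odd j then La else Lb)"
      using let_[of "j - 1"] j lR by auto
    have s: "i (blkidx m j) = snd (R ! (j - 1))"
    proof (cases "j \<le> m")
      case True then show ?thesis by (simp add: blkidx_def i_def)
    next
      case False
      have "R ! (j - 1) = rev R ! (j - 1)" using RR by simp
      also have "\<dots> = R ! (2 * m - j - 1)" using j lR by (simp add: rev_nth)
      finally show ?thesis using False by (simp add: blkidx_def i_def)
    qed
    show "replicate (i (blkidx m j)) (if odd j then La else Lb) = g (R ! (j - 1))"
      using f s by (cases "R ! (j - 1)") (simp add: g_def)
  qed
  have "u = blocks i m" unfolding blocks_def bl u m_eq ..
  then show ?thesis using ipos by blast
qed

definition blkA :: "(nat \<Rightarrow> nat) \<Rightarrow> nat \<Rightarrow> letter list" where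
  "blkA i m = concat (map (\<lambda>j. replicate (i j) (if odd j then La else Lb)) [1..<m])"
definition blkB :: "(nat \<Rightarrow> nat) \<Rightarrow> nat \<Rightarrow> letter list" where
  "blkB i m = concat (map (\<lambda>j. replicate (i (2 * m - j)) (if odd j then La else Lb)) [Suc m..<2 * m])"

lemma blocks_split:
  assumes m1: "1 \<le> m"
  shows "blocks i m = blkA i m @ replicate (i m) (if odd m then La else Lb) @ blkB i m"
proof -
  have u1: "[1..<2 * m] = [1..<m] @ [m..<2 * m]"
    using m1 upt_add_eq_append[of 1 m m] by (simp add: mult_2)
  have u2: "[m..<2 * m] = m # [Suc m..<2 * m]"
    using m1 by (intro upt_conv_Cons) auto
  have c1: "map (\<lambda>j. replicate (i (blkidx m j)) (if odd j then La else Lb)) [1..<m]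
      = map (\<lambda>j. replicate (i j) (if odd j then La else Lb)) [1..<m]"
    by (rule map_cong) (auto simp: blkidx_def)
  have c2: "map (\<lambda>j. replicate (i (blkidx m j)) (if odd j then La else Lb)) [Suc m..<2 * m]
      = map (\<lambda>j. replicate (i (2 * m - j)) (if odd j then La else Lb)) [Suc m..<2 * m]"
    by (rule map_cong) (auto simp: blkidx_def)
  show ?thesis unfolding blocks_def u1 u2 map_append list.map concat_append c1 c2 concat.simps
      blkA_def[symmetric] blkB_def[symmetric]
    by (simp add: blkidx_def)
qed

lemma sum_refl: "(\<Sum>j=Suc m..<2 * m. (f::nat\<Rightarrow>nat) (2 * m - j)) = (\<Sum>k=1..<m. f k)"
  by (rule sum.reindex_bij_witness[of _ "\<lambda>k. 2 * m - k" "\<lambda>j. 2 * m - j"]) auto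

lemma len_A: "length (blkA i m) = (\<Sum>k=1..<m. i k)"
  unfolding blkA_def by (simp add: length_concat comp_def sum_set_upt_conv_sum_list_nat[symmetric])

lemma len_B: "length (blkB i m) = (\<Sum>k=1..<m. i k)"
proof -
  have "length (blkB i m) = (\<Sum>j=Suc m..<2 * m. i (2 * m - j))"
    unfolding blkB_def by (simp add: length_concat comp_def sum_set_upt_conv_sum_list_nat[symmetric])
  then show ?thesis using sum_refl[where f=i and m=m] by simp
qed

lemma blocks_len: "1 \<le> m \<Longrightarrow> length (blocks i m) = i m + 2 * (\<Sum>k=1..<m. i k)"
  by (simp add: blocks_split len_A len_B)

lemma blocks_mid:
  assumes "1 \<le> m" "(\<Sum>k=1..<m. i k) \<le> p" "p < (\<Sum>k=1..<m. i k) + i m"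
  shows "blocks i m ! p = (if odd m then La else Lb)"
proof -
  have "p - length (blkA i m) < i m" using assms by (simp add: len_A)
  then show ?thesis using assms by (simp add: blocks_split nth_append len_A)
qed

lemma blocks_after:
  assumes "2 \<le> m" "1 \<le> i (m - 1)"
  shows "blocks i m ! ((\<Sum>k=1..<m. i k) + i m) = (if even m then La else Lb)"
proof -
  have u: "[Suc m..<2 * m] = Suc m # [Suc (Suc m)..<2 * m]" using assms by (simp add: upt_conv_Cons)
  have e: "2 * m - Suc m = m - 1" using assms by simp
  have "blkB i m ! 0 = (if even m then La else Lb)"
    unfolding blkB_def u using assms e by (simp add: nth_append)
  then show ?thesis using assms by (simp add: blocks_split nth_append len_A)
qed


context fixes a b :: real begin


definition G :: "real \<times> real \<Rightarrow> real \<times> real" where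
  "G p = Rf (F a b (Rf p))"

lemma G_F: "G (F a b p) = p"
  by (cases p) (auto simp: G_def F_def Rf_def domMa_def)

lemma F_Rf: "F a b (Rf p) = Rf (G p)"
  by (simp add: G_def Rf_def)

lemma zpt_Suc: "zpt a b (Suc t) = F a b (zpt a b t)"
  by (simp add: zpt_def)

lemma zpt_add: "zpt a b (s + k) = (F a b ^^ k) (zpt a b s)"
  by (induction k) (auto simp: zpt_Suc)

lemma G_zpt: "k \<le> j \<Longrightarrow> (G ^^ k) (zpt a b j) = zpt a b (j - k)"
proof (induction k)
  case 0 then show ?case by simp
next
  case (Suc k)
  have "j - k = Suc (j - Suc k)" using Suc.prems by simp
  then show ?case using Suc by (simp add: zpt_Suc G_F)
qed

lemma zpt_inj:
  assumes nonper: "\<forall>k>0. (F a b ^^ k) (0, -1) \<noteq> (0, -1)"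
    and eq: "zpt a b i = zpt a b j"
  shows "i = j"
proof (rule ccontr)
  assume ne: "i \<noteq> j"
  have key: "zpt a b (j - i) \<noteq> zpt a b 0" if "i < j" for i j
    using nonper that by (simp add: zpt_def)
  show False
  proof (cases "i < j")
    case True
    have "(G ^^ i) (zpt a b j) = zpt a b (j - i)" using True by (simp add: G_zpt)
    moreover have "(G ^^ i) (zpt a b i) = zpt a b 0" by (simp add: G_zpt)
    ultimately show False using eq key[OF True] by simp
  next
    case False
    then have "j < i" using ne by simp
    have "(G ^^ j) (zpt a b i) = zpt a b (i - j)" using \<open>j < i\<close> by (simp add: G_zpt)
    moreover have "(G ^^ j) (zpt a b j) = zpt a b 0" by (simp add: G_zpt)
    ultimately show False using eq key[OF \<open>j < i\<close>] by simp
  qed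
qed

definition sc :: "real \<Rightarrow> real \<times> real \<Rightarrow> real \<times> real" where
  "sc c p = (c * fst p, c * snd p)"

lemma F_sc: "c > 0 \<Longrightarrow> F a b (sc c p) = sc c (F a b p)"
  by (cases p) (auto simp: sc_def F_def domMa_def algebra_simps zero_less_mult_iff mult_le_0_iff)

lemma Fpow_sc: "c > 0 \<Longrightarrow> (F a b ^^ k) (sc c p) = sc c ((F a b ^^ k) p)"
  by (induction k) (auto simp: F_sc)

lemma zpt_sc: "c > 0 \<Longrightarrow> zpt a b s = sc c (zpt a b r) \<Longrightarrow> zpt a b (s + k) = sc c (zpt a b (r + k))"
  by (simp add: zpt_add Fpow_sc)

lemma zpt0: "zpt a b 0 = (0, -1)" by (simp add: zpt_def)
lemma zpt1: "zpt a b 1 = (1, 0)" by (simp add: zpt_def F_def domMa_def)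

lemma F00: "(F a b ^^ k) (0, 0) = (0, 0)"
  by (induction k) (auto simp: F_def)


lemma snd_F: "snd (F a b p) = fst p"
  by (cases p) (simp add: F_def)

lemma Rf_Rf: "Rf (Rf p) = p" by (simp add: Rf_def)

lemma sym0:
  assumes reach: "(F a b ^^ n) (0, -1) = (0, 1)"
  shows "k \<le> n \<Longrightarrow> zpt a b (Suc k) = Rf (zpt a b (n - k))"
proof (induction k)
  case 0
  have "zpt a b n = (0,1)" using reach by (simp add: zpt_def)
  then show ?case by (simp add: zpt1[simplified] Rf_def)
next
  case (Suc k)
  have nk: "n - k = Suc (n - Suc k)" using Suc.prems by simp
  have "zpt a b (Suc (Suc k)) = F a b (Rf (zpt a b (n - k)))"
    using Suc by (simp add: zpt_Suc)
  also have "\<dots> = Rf (G (zpt a b (n - k)))" by (rule F_Rf)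
  also have "\<dots> = Rf (zpt a b (n - Suc k))" by (simp only: nk zpt_Suc G_F)
  finally show ?case .
qed

lemma symR:
  assumes reach: "(F a b ^^ n) (0, -1) = (0, 1)" and "t \<le> n"
  shows "Rf (zpt a b t) = zpt a b (Suc n - t)"
proof -
  have "zpt a b (Suc (n - t)) = Rf (zpt a b (n - (n - t)))" using sym0[OF reach] assms(2) by simp
  then show ?thesis using assms(2) by (simp add: Rf_Rf Suc_diff_le)
qed

lemma zptn: "(F a b ^^ n) (0, -1) = (0, 1) \<Longrightarrow> zpt a b n = (0, 1)"
  by (simp add: zpt_def)

lemma fixR_iff:
  assumes nonper: "\<forall>k>0. (F a b ^^ k) (0, -1) \<noteq> (0, -1)"
    and reach: "(F a b ^^ n) (0, -1) = (0, 1)" and "t \<le> n"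
  shows "zpt a b t \<in> FixR \<longleftrightarrow> 2 * t = n + 1"
proof -
  have "zpt a b t \<in> FixR \<longleftrightarrow> zpt a b (Suc n - t) = zpt a b t"
    using symR[OF reach assms(3)] by (simp add: FixR_def)
  also have "\<dots> \<longleftrightarrow> Suc n - t = t" using zpt_inj[OF nonper, of "Suc n - t" t] by auto
  finally show ?thesis using assms(3) by auto
qed

lemma fixFR_iff:
  assumes nonper: "\<forall>k>0. (F a b ^^ k) (0, -1) \<noteq> (0, -1)"
    and reach: "(F a b ^^ n) (0, -1) = (0, 1)" and "t \<le> n"
  shows "zpt a b t \<in> FixFR a b \<longleftrightarrow> 2 * t = n + 2"
proof -
  have "F a b (Rf (zpt a b t)) = zpt a b (Suc (Suc n - t))"
    using symR[OF reach assms(3)] by (simp add: zpt_Suc)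
  then have "zpt a b t \<in> FixFR a b \<longleftrightarrow> zpt a b (Suc (Suc n - t)) = zpt a b t"
    by (simp add: FixFR_def)
  also have "\<dots> \<longleftrightarrow> Suc (Suc n - t) = t" using zpt_inj[OF nonper, of "Suc (Suc n - t)" t] by auto
  finally show ?thesis using assms(3) by auto
qed

lemma fst_nz:
  assumes nonper: "\<forall>k>0. (F a b ^^ k) (0, -1) \<noteq> (0, -1)"
    and reach: "(F a b ^^ n) (0, -1) = (0, 1)" and t: "0 < t" "t < n"
  shows "fst (zpt a b t) \<noteq> 0"
proof
  assume f0: "fst (zpt a b t) = 0"
  define y where "y = snd (zpt a b t)"
  have zt: "zpt a b t = (0, y)" using f0 y_def by (cases "zpt a b t") auto
  have Rt: "zpt a b (Suc n - t) = (y, 0)" using symR[OF reach, of t] t zt by (simp add: Rf_def)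
  have zn1: "zpt a b (Suc n) = (-1, 0)" using symR[OF reach, of 0] by (simp add: zpt0 Rf_def)
  consider "y = 0" | "y < 0" | "y > 0" by linarith
  then show False
  proof cases
    case 1
    have "zpt a b (t + (n - t)) = (0, 0)" using zt 1 by (simp add: zpt_add F00)
    then show False using t zptn[OF reach] by simp
  next
    case 2
    have c: "zpt a b t = sc (-y) (zpt a b 0)" using zt by (simp add: sc_def zpt0)
    have "zpt a b (t + Suc n) = sc (-y) (zpt a b (0 + Suc n))" using zpt_sc[OF _ c, of "Suc n"] 2 by simp
    also have "\<dots> = zpt a b (Suc n - t)" using zn1 Rt by (simp add: sc_def)
    finally have "t + Suc n = Suc n - t" using zpt_inj[OF nonper] by blast
    then show False using t by simp
  next
    case 3
    have c: "zpt a b (Suc n - t) = sc y (zpt a b 1)" using Rt zpt1 by (simp add: sc_def)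
    have "zpt a b (Suc n - t + (n - 1)) = sc y (zpt a b (1 + (n - 1)))" using zpt_sc[OF _ c] 3 by simp
    also have "\<dots> = zpt a b t" using zt zptn[OF reach] t by (simp add: sc_def)
    finally have "Suc n - t + (n - 1) = t" using zpt_inj[OF nonper] by blast
    then show False using t by simp
  qed
qed

lemma fst_sym:
  assumes reach: "(F a b ^^ n) (0, -1) = (0, 1)" and "t < n"
  shows "fst (zpt a b (n - t)) = fst (zpt a b t)"
proof -
  have "zpt a b (Suc t) = Rf (zpt a b (n - t))" using sym0[OF reach] assms(2) by simp
  then have "snd (zpt a b (Suc t)) = fst (zpt a b (n - t))" by (simp add: Rf_def)
  then show ?thesis by (simp add: zpt_Suc snd_F)
qed

lemma domMa_nz: "fst p \<noteq> 0 \<Longrightarrow> p \<in> domMa \<longleftrightarrow> fst p > 0"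
  by (cases p) (auto simp: domMa_def)

end


theorem mainTheorem4:
  fixes a b :: real and n m :: nat
  assumes nonper: "\<forall>k>0. (F a b ^^ k) (0, -1) \<noteq> (0, -1)"
    and reach: "(F a b ^^ n) (0, -1) = (0, 1)"
    and rk: "rank (bword a b n) = 2 * m - 1"
  shows "\<exists>i :: nat \<Rightarrow> nat.
     (\<forall>k\<in>{1..m}. 1 \<le> i k)
   \<and> drop 1 (bword a b n) = blocks i m
   \<and> rev (drop 1 (bword a b n)) = drop 1 (bword a b n)
   \<and> i m + 2 * (\<Sum>k=1..<m. i k) = n - 1
   \<and> ((odd n \<and> even (i m)) \<longleftrightarrow> card {t. t \<le> n \<and> zpt a b t \<in> FixR} = 1)
   \<and> (\<forall>t\<le>n. card {s. s \<le> n \<and> zpt a b s \<in> FixR} = 1 \<and> zpt a b t \<in> FixR \<longrightarrow>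
        (zpt a b t \<in> domMa \<longrightarrow> odd m) \<and> (zpt a b t \<in> domMb \<longrightarrow> even m))
   \<and> ((even n \<and> odd (i m)) \<longleftrightarrow> card {t. t \<le> n \<and> zpt a b t \<in> FixFR a b} = 1)
   \<and> (\<forall>t\<le>n. card {s. s \<le> n \<and> zpt a b s \<in> FixFR a b} = 1 \<and> zpt a b t \<in> FixFR a b \<longrightarrow>
        (((i m = 1 \<and> even m) \<or> (i m > 1 \<and> odd m)) \<longrightarrow> zpt a b t \<in> domMa)
      \<and> (((i m = 1 \<and> odd m) \<or> (i m > 1 \<and> even m)) \<longrightarrow> zpt a b t \<in> domMb))"
proof -
  define l where "l t = (if zpt a b t \<in> domMa then La else Lb)" for t
  define u where "u = map l [1..<n]"
  have zn: "zpt a b n = (0, 1)" using reach by (simp add: zpt_def)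
  have n0: "n \<noteq> 0"
  proof
    assume "n = 0" then show False using zn zpt0[of a b] by simp
  qed
  have n1: "n \<noteq> 1" using zn zpt1[of a b] by auto
  have n2: "2 \<le> n" using n0 n1 by simp
  have bw: "bword a b n = La # u"
  proof -
    have "[0..<n] = 0 # [1..<n]" using n0 by (simp add: upt_conv_Cons)
    moreover have "l 0 = La" by (simp add: l_def zpt0 domMa_def)
    ultimately show ?thesis by (simp add: bword_def u_def l_def[abs_def])
  qed
  have du: "drop 1 (bword a b n) = u" using bw by simp
  have lu: "length u = n - 1" by (simp add: u_def)
  have unth: "u ! p = l (Suc p)" if "p < n - 1" for p using that by (simp add: u_def)
  have l1: "l 1 = La" using zpt1[of a b] by (simp add: l_def domMa_def)
  have une: "u \<noteq> []" using lu n2 by auto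
  have uhd: "hd u = La" using une unth[of 0] l1 n2 by (simp add: hd_conv_nth)
  have lsym: "l (n - t) = l t" if "0 < t" "t < n" for t
  proof -
    have "fst (zpt a b (n - t)) = fst (zpt a b t)" using fst_sym[OF reach that(2)] .
    moreover have "fst (zpt a b t) \<noteq> 0" using fst_nz[OF nonper reach that] .
    moreover have "fst (zpt a b (n - t)) \<noteq> 0" using fst_nz[OF nonper reach, of "n - t"] that by simp
    ultimately show ?thesis by (simp add: l_def domMa_nz)
  qed
  have pal: "rev u = u"
  proof (rule nth_equalityI)
    show "length (rev u) = length u" by simp
  next
    fix p assume "p < length (rev u)"
    then have p: "p < n - 1" using lu by simp
    have "rev u ! p = u ! (n - 2 - p)" using p lu by (simp add: rev_nth)
    also have "\<dots> = l (n - (Suc p))" using p unth[of "n - 2 - p"] by (simp add: Suc_diff_Suc)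
    also have "\<dots> = l (Suc p)" using lsym[of "Suc p"] p by simp
    also have "\<dots> = u ! p" using unth[OF p] by simp
    finally show "rev u ! p = u ! p" .
  qed
  obtain r where ur: "u = La # r" using une uhd by (cases u) auto
  have chu: "ch (La # u) = ch u" unfolding ur by (simp add: ch_Cons2)
  have "Suc (ch u) = 2 * m - 1" using rk occ_ch[of "La # u"] chu by (simp add: rank_def bw)
  then obtain i where ipos: "\<forall>k\<in>{1..m}. 1 \<le> i k" and ub: "u = blocks i m"
    using comb[OF une uhd pal] by blast
  have m1: "1 \<le> m" using \<open>Suc (ch u) = 2 * m - 1\<close> by simp
  define S where "S = (\<Sum>k=1..<m. i k)"
  have sumeq: "i m + 2 * S = n - 1" using blocks_len[OF m1, of i] ub lu by (simp add: S_def)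
  have im1: "1 \<le> i m" using ipos m1 by simp
  have FR: "{t. t \<le> n \<and> zpt a b t \<in> FixR} = {t. t \<le> n \<and> 2 * t = n + 1}"
    using fixR_iff[OF nonper reach] by blast
  have FFR: "{t. t \<le> n \<and> zpt a b t \<in> FixFR a b} = {t. t \<le> n \<and> 2 * t = n + 2}"
    using fixFR_iff[OF nonper reach] by blast
  have c1: "card {t. t \<le> n \<and> 2 * t = n + 1} = 1 \<longleftrightarrow> odd n"
  proof (cases "odd n")
    case True
    then have e: "{t. t \<le> n \<and> 2 * t = n + 1} = {(n + 1) div 2}" by auto presburger+
    show ?thesis unfolding e using True by simp
  next
    case False
    then have e: "{t. t \<le> n \<and> 2 * t = n + 1} = {}" by auto presburger
    show ?thesis unfolding e using False by simp
  qed
  have c2: "card {t. t \<le> n \<and> 2 * t = n + 2} = 1 \<longleftrightarrow> even n"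
  proof (cases "even n")
    case True
    then have e: "{t. t \<le> n \<and> 2 * t = n + 2} = {n div 2 + 1}" using n2 by auto
    show ?thesis unfolding e using True by simp
  next
    case False
    then have e: "{t. t \<le> n \<and> 2 * t = n + 2} = {}" by auto presburger
    show ?thesis unfolding e using False by simp
  qed
  have P5: "(odd n \<and> even (i m)) \<longleftrightarrow> card {t. t \<le> n \<and> zpt a b t \<in> FixR} = 1"
    unfolding FR c1 using sumeq n2 by auto presburger
  have P7: "(even n \<and> odd (i m)) \<longleftrightarrow> card {t. t \<le> n \<and> zpt a b t \<in> FixFR a b} = 1"
    unfolding FFR c2 using sumeq n2 by auto presburger
  have dom_l: "zpt a b t \<in> domMa \<longleftrightarrow> l t = La" for t by (simp add: l_def)
  have domb: "p \<in> domMb \<longleftrightarrow> p \<notin> domMa" for p by (simp add: domMb_def)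
  have P6: "\<forall>t\<le>n. card {s. s \<le> n \<and> zpt a b s \<in> FixR} = 1 \<and> zpt a b t \<in> FixR \<longrightarrow>
        (zpt a b t \<in> domMa \<longrightarrow> odd m) \<and> (zpt a b t \<in> domMb \<longrightarrow> even m)"
  proof (intro allI impI)
    fix t assume tn: "t \<le> n" and h: "card {s. s \<le> n \<and> zpt a b s \<in> FixR} = 1 \<and> zpt a b t \<in> FixR"
    then have t2: "2 * t = n + 1" using fixR_iff[OF nonper reach tn] by simp
    have ev: "even (i m)" using t2 sumeq by presburger
    then have im2: "2 \<le> i m" using im1 by presburger
    have p: "t - 1 < n - 1" "S \<le> t - 1" "t - 1 < S + i m" using t2 sumeq im2 by auto
    have "l t = (if odd m then La else Lb)"
      using unth[OF p(1)] blocks_mid[OF m1 p(2)[unfolded S_def] p(3)[unfolded S_def]] ub t2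
      by (simp add: Suc_diff_1)
    then show "(zpt a b t \<in> domMa \<longrightarrow> odd m) \<and> (zpt a b t \<in> domMb \<longrightarrow> even m)"
      by (auto simp: dom_l domb)
  qed
  have P8: "\<forall>t\<le>n. card {s. s \<le> n \<and> zpt a b s \<in> FixFR a b} = 1 \<and> zpt a b t \<in> FixFR a b \<longrightarrow>
        (((i m = 1 \<and> even m) \<or> (i m > 1 \<and> odd m)) \<longrightarrow> zpt a b t \<in> domMa)
      \<and> (((i m = 1 \<and> odd m) \<or> (i m > 1 \<and> even m)) \<longrightarrow> zpt a b t \<in> domMb)"
  proof (intro allI impI)
    fix t assume tn: "t \<le> n" and h: "card {s. s \<le> n \<and> zpt a b s \<in> FixFR a b} = 1 \<and> zpt a b t \<in> FixFR a b"
    then have t2: "2 * t = n + 2" using fixFR_iff[OF nonper reach tn] by simp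
    have od: "odd (i m)" using t2 sumeq n2 by presburger
    consider "i m = 1" "m = 1" | "i m = 1" "2 \<le> m" | "i m > 1" using im1 m1 by linarith
    then show "(((i m = 1 \<and> even m) \<or> (i m > 1 \<and> odd m)) \<longrightarrow> zpt a b t \<in> domMa)
      \<and> (((i m = 1 \<and> odd m) \<or> (i m > 1 \<and> even m)) \<longrightarrow> zpt a b t \<in> domMb)"
    proof cases
      case 1
      then have "S = 0" by (simp add: S_def)
      then have "t = n" using t2 sumeq 1 by simp
      then have "zpt a b t \<notin> domMa" using zn by (simp add: domMa_def)
      then show ?thesis using 1 by (simp add: domb)
    next
      case 2
      have "1 \<le> i (m - 1)" using ipos 2 by simp
      moreover have "i (m - 1) \<le> S" unfolding S_def
        using 2 by (intro member_le_sum) auto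
      ultimately have S1: "1 \<le> S" by simp
      have p: "t - 1 < n - 1" "t - 1 = S + i m" using t2 sumeq 2 S1 by auto
      have "l t = (if even m then La else Lb)"
        using unth[OF p(1)] blocks_after[of m i, OF 2(2) \<open>1 \<le> i (m - 1)\<close>] ub p(2) t2
        by (simp add: S_def Suc_diff_1)
      then show ?thesis using 2 by (auto simp: dom_l domb)
    next
      case 3
      then have im3: "3 \<le> i m" using od by presburger
      have p: "t - 1 < n - 1" "S \<le> t - 1" "t - 1 < S + i m" using t2 sumeq im3 by auto
      have "l t = (if odd m then La else Lb)"
        using unth[OF p(1)] blocks_mid[OF m1 p(2)[unfolded S_def] p(3)[unfolded S_def]] ub t2
        by (simp add: Suc_diff_1)
      then show ?thesis using 3 by (auto simp: dom_l domb)
    qed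
  qed
  show ?thesis
    apply (rule exI[of _ i])
    using ipos ub du pal sumeq P5 P6 P7 P8 by (simp add: S_def)
qed

end
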